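(* Let $(M,g)$ be a spacetime and let $\gamma$ be the worldline of an arbitrarily accelerated observer $\mathcal O$ (with arbitrarily rotating spatial triad). Let $e_a$ be the proper reference frame of $\mathcal O$, and take $e_a$ as the teleparallel frame. Then the gravitational energy-momentum density and the angular momentum density vanish along $\gamma$: $t^{\mu a}|_\gamma=0$ and $M^{ab}|_\gamma=0$.
   Context: Signature $(+,-,-,-)$. A tetrad $e_a=e_a{}^\mu\partial_\mu$ with coframe $\theta^a=e^a{}_\mu dx^\mu$ satisfies $g_{\mu\nu}=\eta_{ab}e^a{}_\mu e^b{}_\nu$; indices are converted with the tetrad and raised/lowered with $\eta_{ab}$ or $g_{\mu\nu}$; $e=\det(e^a{}_\mu)$. The proper reference frame of $\mathcal O$: along $\gamma$, $e_{(0)}$ is the observer's 4-velocity and $e_{(i)}$ its spatial triad; the frame is extended off $\gamma$ by parallel transport (Levi-Civita connection) along the spacelike geodesics orthogonal to $e_{(0)}$, i.e. it is the tetrad adapted to the observer's proper (Fermi-type) coordinates, so that along $\gamma$ the Levi-Civita spin connection is $\mathring\omega^a{}_{bc}|_\gamma=\delta^{(0)}_b\big(a^a\delta^{(0)}_c-a_c\delta^a_{(0)}+\omega^d\varepsilon_{(0)dec}\eta^{ea}\big)$ with $a^a$ the acceleration and $\omega^d$ the triad rotation. Taking $e_a$ as teleparallel frame means the torsion is $T^a{}_{\mu\nu}=\partial_\mu e^a{}_\nu-\partial_\nu e^a{}_\mu$. Define $T_a=T^b{}_{ba}$, $\Sigma^{\lambda\mu\nu}=\tfrac14\big(T^{\lambda\mu\nu}+T^{\mu\lambda\nu}-T^{\nu\lambda\mu}\big)+\tfrac12\big(g^{\lambda\nu}T^{\mu}-g^{\lambda\mu}T^{\nu}\big)$,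 $T=\Sigma^{abc}T_{abc}$, $t^{\mu a}=k\big(4\Sigma^{bc\mu}T_{bc}{}^{a}-e^{a\mu}T\big)$, and $M^{ab}=-4ke\big(\Sigma^{a0b}-\Sigma^{b0a}\big)$, with $k=1/(16\pi)$. *)

theory Defs
  imports "HOL-Analysis.Analysis"
begin

(* Coordinates x^mu on a chart of spacetime: points are real^4, indices (coordinate
   as well as frame indices) range over the numeral type 4 = {0,1,2,3}.
   A tetrad field is given by its coframe matrix  C x $ a $ mu = e^a_mu(x). *)

type_synonym pt = "real^4"
type_synonym coframe = "pt \<Rightarrow> real^4^4"

definition eta :: "4 \<Rightarrow> 4 \<Rightarrow> real" where
  "eta a b = (if a = b then (if a = 0 then 1 else -1) else 0)"

definition etaM :: "real^4^4" where
  "etaM = (\<chi> a b. eta a b)"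

definition kappa :: real where
  "kappa = 1 / (16 * pi)"

definition pd :: "4 \<Rightarrow> (pt \<Rightarrow> real) \<Rightarrow> pt \<Rightarrow> real" where
  "pd i f x = deriv (\<lambda>t. f (x + t *\<^sub>R axis i 1)) 0"

definition metric :: "coframe \<Rightarrow> pt \<Rightarrow> real^4^4" where
  "metric C x = transpose (C x) ** etaM ** C x"

definition ginv :: "coframe \<Rightarrow> pt \<Rightarrow> real^4^4" where
  "ginv C x = matrix_inv (metric C x)"

(* frame e_a^mu = frame C x $ mu $ a  (inverse of the coframe matrix) *)
definition frame :: "coframe \<Rightarrow> pt \<Rightarrow> real^4^4" where
  "frame C x = matrix_inv (C x)"

definition frameUp :: "coframe \<Rightarrow> pt \<Rightarrow> 4 \<Rightarrow> 4 \<Rightarrow> real" where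
  "frameUp C x a mu = (\<Sum>b\<in>UNIV. eta a b * frame C x $ mu $ b)"

definition christ :: "coframe \<Rightarrow> pt \<Rightarrow> 4 \<Rightarrow> 4 \<Rightarrow> 4 \<Rightarrow> real" where
  "christ C x mu nu lam = (1/2) * (\<Sum>rho\<in>UNIV. ginv C x $ mu $ rho *
      (pd nu (\<lambda>y. metric C y $ rho $ lam) x + pd lam (\<lambda>y. metric C y $ rho $ nu) x
       - pd rho (\<lambda>y. metric C y $ nu $ lam) x))"

definition torF :: "coframe \<Rightarrow> pt \<Rightarrow> 4 \<Rightarrow> 4 \<Rightarrow> 4 \<Rightarrow> real" where
  "torF C x a mu nu = pd mu (\<lambda>y. C y $ a $ nu) x - pd nu (\<lambda>y. C y $ a $ mu) x"

definition torC :: "coframe \<Rightarrow> pt \<Rightarrow> 4 \<Rightarrow> 4 \<Rightarrow> 4 \<Rightarrow> real" where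
  "torC C x lam mu nu = (\<Sum>a\<in>UNIV. frame C x $ lam $ a * torF C x a mu nu)"

definition torL :: "coframe \<Rightarrow> pt \<Rightarrow> 4 \<Rightarrow> 4 \<Rightarrow> 4 \<Rightarrow> real" where
  "torL C x lam mu nu = (\<Sum>rho\<in>UNIV. metric C x $ lam $ rho * torC C x rho mu nu)"

definition torU :: "coframe \<Rightarrow> pt \<Rightarrow> 4 \<Rightarrow> 4 \<Rightarrow> 4 \<Rightarrow> real" where
  "torU C x lam mu nu = (\<Sum>al\<in>UNIV. \<Sum>be\<in>UNIV.
      ginv C x $ mu $ al * ginv C x $ nu $ be * torC C x lam al be)"

definition torV :: "coframe \<Rightarrow> pt \<Rightarrow> 4 \<Rightarrow> real" where
  "torV C x mu = (\<Sum>be\<in>UNIV. torC C x be be mu)"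

definition torVU :: "coframe \<Rightarrow> pt \<Rightarrow> 4 \<Rightarrow> real" where
  "torVU C x mu = (\<Sum>al\<in>UNIV. ginv C x $ mu $ al * torV C x al)"

definition Sigma :: "coframe \<Rightarrow> pt \<Rightarrow> 4 \<Rightarrow> 4 \<Rightarrow> 4 \<Rightarrow> real" where
  "Sigma C x lam mu nu =
     (1/4) * (torU C x lam mu nu + torU C x mu lam nu - torU C x nu lam mu)
   + (1/2) * (ginv C x $ lam $ nu * torVU C x mu - ginv C x $ lam $ mu * torVU C x nu)"

definition torScalar :: "coframe \<Rightarrow> pt \<Rightarrow> real" where
  "torScalar C x = (\<Sum>lam\<in>UNIV. \<Sum>mu\<in>UNIV. \<Sum>nu\<in>UNIV.
      Sigma C x lam mu nu * torL C x lam mu nu)"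

definition tEM :: "coframe \<Rightarrow> pt \<Rightarrow> 4 \<Rightarrow> 4 \<Rightarrow> real" where
  "tEM C x mu a = kappa * (4 * (\<Sum>rho\<in>UNIV. \<Sum>sig\<in>UNIV. \<Sum>lam\<in>UNIV.
        Sigma C x rho sig mu * torL C x rho sig lam * frameUp C x a lam)
      - frameUp C x a mu * torScalar C x)"

(* Sigma^{a mu b} with a,b frame indices, mu a coordinate index *)
definition SigmaF :: "coframe \<Rightarrow> pt \<Rightarrow> 4 \<Rightarrow> 4 \<Rightarrow> 4 \<Rightarrow> real" where
  "SigmaF C x a mu b = (\<Sum>rho\<in>UNIV. \<Sum>sig\<in>UNIV.
      C x $ a $ rho * C x $ b $ sig * Sigma C x rho mu sig)"

definition Mang :: "coframe \<Rightarrow> pt \<Rightarrow> 4 \<Rightarrow> 4 \<Rightarrow> real" where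
  "Mang C x a b = - 4 * kappa * det (C x) * (SigmaF C x a 0 b - SigmaF C x b 0 a)"

(* the observer's worldline in its proper (Fermi) coordinates: x = (tau,0,0,0) *)
definition worldline :: "real \<Rightarrow> pt" where
  "worldline tau = tau *\<^sub>R axis 0 1"

end

theory Submission
  imports Defs
begin


lemma sum4: "sum f (UNIV::4 set) = f 0 + f 1 + f 2 + f 3"
proof -
  have "(4::4) = 0" by simp
  then have U: "(UNIV::4 set) = {0,1,2,3}" using exhaust_4 by (metis UNIV_4 insert_commute)
  show ?thesis unfolding U by (simp add: ac_simps)
qed

lemma exhaust0: "(x::4) = 0 \<or> x = 1 \<or> x = 2 \<or> x = 3"
proof -
  have "(4::4) = 0" by simp
  then show ?thesis using exhaust_4[of x] by metis
qed

lemma four_neq[simp]: "(0::4) \<noteq> 1" "(0::4) \<noteq> 2" "(0::4) \<noteq> 3" "(1::4) \<noteq> 2" "(1::4) \<noteq> 3" "(2::4) \<noteq> 3"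
  "(1::4) \<noteq> 0" "(2::4) \<noteq> 0" "(3::4) \<noteq> 0" "(2::4) \<noteq> 1" "(3::4) \<noteq> 1" "(3::4) \<noteq> 2"
  by simp_all

lemma minv: "invertible A \<Longrightarrow> A ** matrix_inv A = mat 1 \<and> matrix_inv A ** A = mat 1"
  unfolding invertible_def matrix_inv_def by (rule someI_ex)

lemma minv_unique:
  fixes A B :: "real^'n^'n"
  assumes "A ** B = mat 1" "B ** A = mat 1" shows "matrix_inv A = B"
proof -
  have i: "invertible A" using assms invertible_def by blast
  have "matrix_inv A = matrix_inv A ** (A ** B)" by (simp add: assms)
  also have "\<dots> = (matrix_inv A ** A) ** B" by (simp add: matrix_mul_assoc)
  also have "\<dots> = B" using minv[OF i] by simp
  finally show ?thesis .
qed

lemma etaM_sq: "etaM ** etaM = mat 1"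
  by (simp add: etaM_def matrix_matrix_mult_def mat_def vec_eq_iff sum4 eta_def forall_4)

lemma mat1_entry: "(mat 1 :: real^'n^'n) $ i $ j = (if i = j then 1 else 0)"
  by (simp add: mat_def)

lemma if01_mult[simp]: "(if P then 1 else 0) * (y::real) = (if P then y else 0)" by simp

lemma alg:
  fixes C :: "real^4 \<Rightarrow> real^4^4" and D :: "4 \<Rightarrow> 4 \<Rightarrow> 4 \<Rightarrow> real"
  assumes C1: "C x = mat 1"
   and tor: "\<And>a m n. torF C x a m n = D m a n - D n a m"
   and D0: "\<And>a b. D 0 a b = 0"
   and Dsp: "\<And>j a i. j \<noteq> 0 \<Longrightarrow> i \<noteq> 0 \<Longrightarrow> D j a i = 0"
   and anti: "\<And>i k. i \<noteq> 0 \<Longrightarrow> k \<noteq> 0 \<Longrightarrow> D i k 0 = - D k i 0"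
  shows "tEM C x mu a = 0 \<and> Mang C x a b = 0"
proof -
  have met: "metric C x = etaM" by (simp add: metric_def C1)
  have gi: "ginv C x = etaM" unfolding ginv_def met by (rule minv_unique) (simp_all add: etaM_sq)
  have fr: "frame C x = mat 1" unfolding frame_def C1 by (rule minv_unique) simp_all
  have etaM_e: "\<And>i j. etaM $ i $ j = eta i j" by (simp add: etaM_def)
  have eta_d: "\<And>i j. eta i j = (if i = j then eta i i else 0)" by (simp add: eta_def)
  have tC: "\<And>l m n. torC C x l m n = torF C x l m n"
    by (simp add: torC_def fr mat1_entry)
  have tL: "torL C x l m n = eta l l * torF C x l m n" for l m n
    using exhaust0[of l] by (auto simp add: torL_def met etaM_e tC sum4 eta_def)
  have tU: "torU C x l m n = eta m m * eta n n * torF C x l m n" for l m n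
    using exhaust0[of m] exhaust0[of n] by (auto simp add: torU_def gi etaM_e tC sum4 eta_def)
  have tVU: "torVU C x m = eta m m * (\<Sum>b\<in>UNIV. torF C x b b m)" for m
    using exhaust0[of m] by (auto simp add: torVU_def torV_def gi etaM_e tC sum4 eta_def)
  have fU: "frameUp C x a m = eta a m" for a m
    using exhaust0[of a] exhaust0[of m] by (auto simp add: frameUp_def fr mat1_entry sum4 eta_def)
  have SF: "SigmaF C x a m b = Sigma C x a m b" for a m b
    using exhaust0[of a] exhaust0[of b] by (auto simp add: SigmaF_def C1 mat1_entry sum4)
  have Dv: "D 1 2 0 = - D 2 1 0" "D 1 3 0 = - D 3 1 0" "D 2 3 0 = - D 3 2 0"
    "D 1 1 0 = 0" "D 2 2 0 = 0" "D 3 3 0 = 0" using anti[of 1 2] anti[of 1 3] anti[of 2 3]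
    anti[of 1 1] anti[of 2 2] anti[of 3 3] by simp_all
  have Sg: "\<And>l m n. Sigma C x l m n = (1/4) * (eta m m * eta n n * torF C x l m n
     + eta l l * eta n n * torF C x m l n - eta l l * eta m m * torF C x n l m)
     + (1/2) * (eta l n * eta m m * (\<Sum>b\<in>UNIV. torF C x b b m) - eta l m * eta n n * (\<Sum>b\<in>UNIV. torF C x b b n))"
    by (simp add: Sigma_def tU tVU gi etaM_e)
  have M: "Mang C x a b = 0"
    unfolding Mang_def SF Sg tor using exhaust0[of a] exhaust0[of b]
    by (auto simp: sum4 D0 Dsp Dv eta_def)
  have T: "tEM C x mu a = 0"
    unfolding tEM_def torScalar_def fU Sg tL tor using exhaust0[of a] exhaust0[of mu]
    by (auto simp: sum4 D0 Dsp Dv eta_def)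
  show ?thesis using M T by simp
qed




lemma mult_if01[simp]: "(y::real) * (if P then 1 else 0) = (if P then y else 0)" by simp

lemma line_deriv:
  fixes f :: "real^4 \<Rightarrow> real"
  assumes "(f has_derivative f') (at x)"
  shows "((\<lambda>r. f (x + r *\<^sub>R v)) has_real_derivative f' v) (at 0)"
proof -
  have l: "((\<lambda>r::real. x + r *\<^sub>R v) has_derivative (\<lambda>r. r *\<^sub>R v)) (at 0)"
    by (auto intro!: derivative_eq_intros)
  have "(f has_derivative f') (at ((\<lambda>r::real. x + r *\<^sub>R v) 0))" using assms by simp
  from has_derivative_compose[OF l this]
  have "((\<lambda>r. f (x + r *\<^sub>R v)) has_derivative (\<lambda>r. f' (r *\<^sub>R v))) (at 0)" .
  moreover have "(\<lambda>r. f' (r *\<^sub>R v)) = (*) (f' v)"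
    using has_derivative_bounded_linear[OF assms] by (auto simp: fun_eq_iff linear_simps)
  ultimately show ?thesis by (simp add: has_field_derivative_def)
qed

lemma pd_has: "(f has_derivative f') (at x) \<Longrightarrow> pd i f x = f' (axis i 1)"
  unfolding pd_def by (rule DERIV_imp_deriv, rule line_deriv)

lemma pd_fd: "f differentiable (at x) \<Longrightarrow> pd i f x = frechet_derivative f (at x) (axis i 1)"
  by (rule pd_has) (simp add: frechet_derivative_works)

lemma pd_mult:
  assumes "f differentiable (at x)" "g differentiable (at x)"
  shows "pd i (\<lambda>y. f y * g y) x = pd i f x * g x + f x * pd i g x"
proof -
  have "((\<lambda>y. f y * g y) has_derivative (\<lambda>h. f x * frechet_derivative g (at x) h + frechet_derivative f (at x) h * g x)) (at x)"
    using assms by (intro has_derivative_mult) (simp_all add: frechet_derivative_works)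
  then show ?thesis using assms by (simp add: pd_has pd_fd)
qed

lemma pd_cmult:
  assumes "f differentiable (at x)"
  shows "pd i (\<lambda>y. c * f y) x = c * pd i f x"
proof -
  have "((\<lambda>y. c * f y) has_derivative (\<lambda>h. c * frechet_derivative f (at x) h)) (at x)"
    using assms by (intro has_derivative_mult_right) (simp_all add: frechet_derivative_works)
  then show ?thesis using assms by (simp add: pd_has pd_fd)
qed

lemma pd_sum:
  assumes "finite S" "\<And>k. k \<in> S \<Longrightarrow> f k differentiable (at x)"
  shows "pd i (\<lambda>y. \<Sum>k\<in>S. f k y) x = (\<Sum>k\<in>S. pd i (f k) x)"
proof -
  have "((\<lambda>y. \<Sum>k\<in>S. f k y) has_derivative (\<lambda>h. \<Sum>k\<in>S. frechet_derivative (f k) (at x) h)) (at x)"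
    using assms by (intro has_derivative_sum) (simp_all add: frechet_derivative_works)
  then show ?thesis using assms by (simp add: pd_has pd_fd)
qed

lemma nonbot: assumes "(e::real) > 0" shows "at 0 within {0..<e} \<noteq> bot"
proof -
  have "(0::real) islimpt {0..<e}" unfolding islimpt_approachable_real
  proof (intro allI impI)
    fix d::real assume "d > 0"
    show "\<exists>x'\<in>{0..<e}. x' \<noteq> 0 \<and> \<bar>x' - 0\<bar> < d"
      by (rule bexI[of _ "min d e / 2"]) (use \<open>d>0\<close> assms in auto)
  qed
  then show ?thesis using trivial_limit_within by blast
qed

lemma frame_step:
  fixes C :: "real^4 \<Rightarrow> real^4^4"
  assumes C1: "C x = mat 1" and e: "e > 0"
    and Cd: "\<And>a m. (\<lambda>y. C y $ a $ m) differentiable (at x)"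
    and inv: "\<And>r. r \<in> {0..<e} \<Longrightarrow> invertible (C (x + r *\<^sub>R n))"
    and fd: "\<And>a m. ((\<lambda>r. frame C (x + r *\<^sub>R n) $ m $ a) has_real_derivative F' m a) (at 0 within {0..<e})"
  shows "frechet_derivative (\<lambda>y. C y $ a $ b) (at x) n = - F' a b"
proof -
  let ?fd = "\<lambda>a m. frechet_derivative (\<lambda>y. C y $ a $ m) (at x) n"
  have Cl: "((\<lambda>r. C (x + r *\<^sub>R n) $ a $ m) has_real_derivative ?fd a m) (at 0 within {0..<e})" for m
    by (rule has_field_derivative_at_within, rule line_deriv) (use Cd in \<open>simp add: frechet_derivative_works\<close>)
  have fr: "frame C x = mat 1" unfolding frame_def C1 by (rule minv_unique) simp_all
  have P1: "((\<lambda>r. \<Sum>m\<in>UNIV. C (x + r *\<^sub>R n) $ a $ m * frame C (x + r *\<^sub>R n) $ m $ b) has_real_derivative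
      (\<Sum>m\<in>UNIV. ?fd a m * frame C (x + 0 *\<^sub>R n) $ m $ b + F' m b * C (x + 0 *\<^sub>R n) $ a $ m)) (at 0 within {0..<e})"
    by (rule DERIV_sum, rule DERIV_mult[OF Cl fd])
  have eq: "(\<Sum>m\<in>UNIV. ?fd a m * frame C (x + 0 *\<^sub>R n) $ m $ b + F' m b * C (x + 0 *\<^sub>R n) $ a $ m) = F' a b + ?fd a b"
    by (simp add: C1 fr mat1_entry sum.distrib)
  note P1' = P1[unfolded eq]
  have P0: "((\<lambda>r. \<Sum>m\<in>UNIV. C (x + r *\<^sub>R n) $ a $ m * frame C (x + r *\<^sub>R n) $ m $ b) has_real_derivative 0)
     (at 0 within {0..<e})"
  proof (rule has_field_derivative_transform_within[OF DERIV_const[of "(mat 1 :: real^4^4) $ a $ b"] e])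
    show "0 \<in> {0..<e}" using e by simp
    fix r assume "r \<in> {0..<e}"
    then have "invertible (C (x + r *\<^sub>R n))" by (rule inv)
    then have "C (x + r *\<^sub>R n) ** frame C (x + r *\<^sub>R n) = mat 1"
      unfolding frame_def using minv by blast
    from arg_cong[OF this, of "\<lambda>M. M $ a $ b"]
    show "(mat 1 :: real^4^4) $ a $ b = (\<Sum>m\<in>UNIV. C (x + r *\<^sub>R n) $ a $ m * frame C (x + r *\<^sub>R n) $ m $ b)"
      by (simp only: matrix_matrix_mult_def vec_lambda_beta)
  qed
  have "F' a b + ?fd a b = 0" by (rule has_field_derivative_unique[OF P1' P0 nonbot[OF e]])
  then show ?thesis by simp
qed

lemma metric_entry: "metric C y $ r $ l = (\<Sum>b\<in>UNIV. \<Sum>a\<in>UNIV. eta a b * (C y $ a $ r * C y $ b $ l))"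
  by (simp add: metric_def matrix_matrix_mult_def transpose_def etaM_def sum_distrib_right sum_distrib_left algebra_simps)

lemma metric_sym: "metric C y $ r $ l = metric C y $ l $ r"
proof -
  have e: "eta a b = eta b a" for a b by (simp add: eta_def)
  show ?thesis unfolding metric_entry
    by (subst sum.swap) (simp add: e algebra_simps)
qed

lemma christ_sym: "christ C y mu nu lam = christ C y mu lam nu"
proof -
  have "(\<lambda>y. metric C y $ nu $ lam) = (\<lambda>y. metric C y $ lam $ nu)" by (rule ext, rule metric_sym)
  then show ?thesis unfolding christ_def by (simp add: algebra_simps)
qed

lemma quad_axis: "(\<Sum>nu\<in>UNIV. \<Sum>lam\<in>UNIV. g nu lam * (axis i 1 :: real^4) $ nu * (axis i 1 :: real^4) $ lam) = g i i"
  using exhaust0[of i] by (auto simp: sum4 axis_def)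

lemma quad_axis2: "(\<Sum>nu\<in>UNIV. \<Sum>lam\<in>UNIV. g nu lam * (axis i 1 + axis j 1 :: real^4) $ nu * (axis i 1 + axis j 1 :: real^4) $ lam)
   = g i i + g i j + g j i + g j j"
  using exhaust0[of i] exhaust0[of j] by (auto simp: sum4 axis_def algebra_simps)

theorem mainTheorem2:
  fixes C :: "real^4 \<Rightarrow> real^4^4" and U :: "(real^4) set" and I :: "real set"
  assumes U_open: "open U"
    and I_open: "open I"
    and C_diff: "\<forall>x\<in>U. \<forall>a mu. (\<lambda>y. C y $ a $ mu) differentiable (at x)"
    and C_inv: "\<forall>x\<in>U. invertible (C x)"
    and on_chart: "\<forall>tau\<in>I. worldline tau \<in> U"
    and adapted: "\<forall>tau\<in>I. C (worldline tau) = mat 1"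
    and fermi: "\<forall>tau\<in>I. \<forall>n::real^4. n $ 0 = 0 \<longrightarrow>
        (\<exists>\<epsilon>>0. \<forall>s. 0 \<le> s \<and> s < \<epsilon> \<longrightarrow>
           worldline tau + s *\<^sub>R n \<in> U
         \<and> (\<forall>mu. (\<Sum>nu\<in>UNIV. \<Sum>lam\<in>UNIV.
                 christ C (worldline tau + s *\<^sub>R n) mu nu lam * n $ nu * n $ lam) = 0)
         \<and> (\<forall>a mu. ((\<lambda>r. frame C (worldline tau + r *\<^sub>R n) $ mu $ a)
                 has_real_derivative
                   (- (\<Sum>nu\<in>UNIV. \<Sum>lam\<in>UNIV.
                        christ C (worldline tau + s *\<^sub>R n) mu nu lam * n $ nu
                        * frame C (worldline tau + s *\<^sub>R n) $ lam $ a)))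
                 (at s within {0..<\<epsilon>})))"
  shows "\<forall>tau\<in>I. (\<forall>mu a. tEM C (worldline tau) mu a = 0)
                \<and> (\<forall>a b. Mang C (worldline tau) a b = 0)"
proof
  fix tau assume tau: "tau \<in> I"
  define x where "x = worldline tau"
  have xU: "x \<in> U" using on_chart tau x_def by simp
  have C1: "C x = mat 1" using adapted tau x_def by simp
  have Cd: "\<And>a m. (\<lambda>y. C y $ a $ m) differentiable (at x)" using C_diff xU by blast
  have fr: "frame C x = mat 1" unfolding frame_def C1 by (rule minv_unique) simp_all
  have met: "metric C x = etaM" by (simp add: metric_def C1)
  have gi: "ginv C x = etaM" unfolding ginv_def met by (rule minv_unique) (simp_all add: etaM_sq)
  define D where "D k a b = pd k (\<lambda>y. C y $ a $ b) x" for k a b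
  have D0: "D 0 a b = 0" for a b
  proof -
    obtain d where d: "d > 0" "ball tau d \<subseteq> I" using I_open tau open_contains_ball by blast
    have "((\<lambda>t. C (x + t *\<^sub>R axis 0 1) $ a $ b) has_real_derivative 0) (at 0 within UNIV)"
    proof (rule has_field_derivative_transform_within[OF DERIV_const[of "(mat 1::real^4^4) $ a $ b"] d(1)])
      fix t :: real assume "t \<in> UNIV" "dist t 0 < d"
      then have "tau + t \<in> I" using d(2) by (auto simp: dist_real_def)
      moreover have "x + t *\<^sub>R axis 0 1 = worldline (tau + t)"
        by (simp add: x_def worldline_def scaleR_add_left)
      ultimately show "(mat 1::real^4^4) $ a $ b = C (x + t *\<^sub>R axis 0 1) $ a $ b"
        using adapted by simp
    qed simp
    then show ?thesis unfolding D_def pd_def by (intro DERIV_imp_deriv) simp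
  qed
  have fermi_x: "\<And>n::real^4. n $ 0 = 0 \<Longrightarrow> (\<exists>\<epsilon>>0. \<forall>s. 0 \<le> s \<and> s < \<epsilon> \<longrightarrow>
           x + s *\<^sub>R n \<in> U
         \<and> (\<forall>mu. (\<Sum>nu\<in>UNIV. \<Sum>lam\<in>UNIV.
                 christ C (x + s *\<^sub>R n) mu nu lam * n $ nu * n $ lam) = 0)
         \<and> (\<forall>a mu. ((\<lambda>r. frame C (x + r *\<^sub>R n) $ mu $ a)
                 has_real_derivative
                   (- (\<Sum>nu\<in>UNIV. \<Sum>lam\<in>UNIV.
                        christ C (x + s *\<^sub>R n) mu nu lam * n $ nu
                        * frame C (x + s *\<^sub>R n) $ lam $ a)))
                 (at s within {0..<\<epsilon>})))"
    using fermi tau x_def by blast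
  have geo: "(\<Sum>nu\<in>UNIV. \<Sum>lam\<in>UNIV. christ C x mu nu lam * n $ nu * n $ lam) = 0"
    if n0: "n $ 0 = 0" for n :: "real^4" and mu
  proof -
    obtain e where "e > 0" and H: "\<forall>s. 0 \<le> s \<and> s < e \<longrightarrow> (\<forall>mu. (\<Sum>nu\<in>UNIV. \<Sum>lam\<in>UNIV.
                 christ C (x + s *\<^sub>R n) mu nu lam * n $ nu * n $ lam) = 0)"
      using fermi_x[OF n0] by blast
    then show ?thesis using H[rule_format, of 0] by simp
  qed
  have Gsp: "christ C x mu i j = 0" if "i \<noteq> 0" "j \<noteq> 0" for mu i j
  proof -
    have ii: "christ C x mu k k = 0" if "k \<noteq> 0" for k
      using geo[of "axis k 1" mu] that by (simp add: quad_axis axis_def)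
    show ?thesis
    proof (cases "i = j")
      case True then show ?thesis using ii that by simp
    next
      case False
      have "(axis i 1 + axis j 1 :: real^4) $ 0 = 0" using that by (simp add: axis_def)
      from geo[OF this, of mu] have "christ C x mu i i + christ C x mu i j + christ C x mu j i + christ C x mu j j = 0"
        by (simp only: quad_axis2)
      then show ?thesis using ii that christ_sym[of C x mu i j] by simp
    qed
  qed
  have DG: "D j a b = christ C x a j b" if j0: "j \<noteq> 0" for j a b
  proof -
    let ?n = "axis j 1 :: real^4"
    have n0: "?n $ 0 = 0" using j0 by (simp add: axis_def)
    obtain e where e: "e > 0" and H: "\<forall>s. 0 \<le> s \<and> s < e \<longrightarrow>
           x + s *\<^sub>R ?n \<in> U
         \<and> (\<forall>a mu. ((\<lambda>r. frame C (x + r *\<^sub>R ?n) $ mu $ a)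
                 has_real_derivative
                   (- (\<Sum>nu\<in>UNIV. \<Sum>lam\<in>UNIV.
                        christ C (x + s *\<^sub>R ?n) mu nu lam * ?n $ nu
                        * frame C (x + s *\<^sub>R ?n) $ lam $ a)))
                 (at s within {0..<e}))"
      using fermi_x[OF n0] by blast
    have inv: "invertible (C (x + r *\<^sub>R ?n))" if "r \<in> {0..<e}" for r
      using H that C_inv by auto
    have fd: "((\<lambda>r. frame C (x + r *\<^sub>R ?n) $ m $ a) has_real_derivative
       (- (\<Sum>nu\<in>UNIV. \<Sum>lam\<in>UNIV. christ C x m nu lam * ?n $ nu * frame C x $ lam $ a)))
       (at 0 within {0..<e})" for a m
      using H[rule_format, of 0] e by simp
    have "frechet_derivative (\<lambda>y. C y $ a $ b) (at x) ?n
       = - (- (\<Sum>nu\<in>UNIV. \<Sum>lam\<in>UNIV. christ C x a nu lam * ?n $ nu * frame C x $ lam $ b))"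
      by (rule frame_step[OF C1 e Cd inv fd])
    also have "\<dots> = christ C x a j b"
      using exhaust0[of j] exhaust0[of b] by (auto simp: fr mat1_entry sum4 axis_def)
    finally show ?thesis unfolding D_def using pd_fd[OF Cd] by simp
  qed
  have pg: "pd k (\<lambda>y. metric C y $ r $ l) x = eta l l * D k l r + eta r r * D k r l" for k r l
  proof -
    have "(\<lambda>y. metric C y $ r $ l) = (\<lambda>y. \<Sum>b\<in>UNIV. \<Sum>a\<in>UNIV. eta a b * (C y $ a $ r * C y $ b $ l))"
      by (rule ext, rule metric_entry)
    then have "pd k (\<lambda>y. metric C y $ r $ l) x
      = (\<Sum>b\<in>UNIV. \<Sum>a\<in>UNIV. eta a b * (D k a r * C x $ b $ l + C x $ a $ r * D k b l))"
      using Cd by (simp add: pd_sum pd_cmult pd_mult D_def)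
    also have "\<dots> = eta l l * D k l r + eta r r * D k r l"
      using exhaust0[of r] exhaust0[of l] by (auto simp: C1 mat1_entry sum4 eta_def)
    finally show ?thesis .
  qed
  have Gf: "christ C x mu nu lam = 1/2 * eta mu mu *
      (pd nu (\<lambda>y. metric C y $ mu $ lam) x + pd lam (\<lambda>y. metric C y $ mu $ nu) x
       - pd mu (\<lambda>y. metric C y $ nu $ lam) x)" for mu nu lam
    unfolding christ_def gi using exhaust0[of mu] by (auto simp: etaM_def sum4 eta_def)
  have Dsp: "D j a i = 0" if "j \<noteq> 0" "i \<noteq> 0" for j a i
    using DG[of j a i] Gsp[of j i a] that by simp
  have anti: "D i k 0 = - D k i 0" if "i \<noteq> 0" "k \<noteq> 0" for i k
  proof -
    have "D i k 0 = christ C x k i 0" using DG that by simp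
    also have "\<dots> = 1/2 * eta k k * ((eta 0 0 * D i 0 k + eta k k * D i k 0) + (eta i i * D 0 i k + eta k k * D 0 k i)
        - (eta 0 0 * D k 0 i + eta i i * D k i 0))"
      unfolding Gf pg ..
    finally have "D i k 0 = - ((D k i 0 - D i k 0) / 2)" using that by (simp add: eta_def D0 Dsp)
    then show ?thesis by (simp add: field_simps)
  qed
  have tor: "torF C x a m n = D m a n - D n a m" for a m n
    by (simp add: torF_def D_def)
  show "(\<forall>mu a. tEM C (worldline tau) mu a = 0) \<and> (\<forall>a b. Mang C (worldline tau) a b = 0)"
    using alg[OF C1 tor D0 Dsp anti] x_def by blast
qed

end
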